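(* Let $C$ be a convex set in the plane of diameter $d$, and let $pq$ be a straight-line segment that intersects $C$. Then for every point $r\in C$, $\min\{|rp|,|rq|\}\le \sqrt{d^2+|pq|^2/4}$.
   Context: $|xy|$ denotes the Euclidean distance between points $x$ and $y$. *)

theory Defs
  imports "HOL-Analysis.Analysis"
begin

end

theory Submission
  imports Defs
begin

lemma key_id:
  fixes y w :: "real ^ 2" and t :: real
  shows "(1-t) * (norm y)^2 + t * (norm (y - w))^2 = (norm (y - t *\<^sub>R w))^2 + t*(1-t)*(norm w)^2"
  by (simp add: power2_norm_eq_inner inner_diff_left inner_diff_right algebra_simps inner_commute)

theorem lemma1:
  fixes C :: "(real ^ 2) set" and p q r :: "real ^ 2" and d :: real
  assumes "convex C" and "bounded C" and "diameter C = d"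
    and "closed_segment p q \<inter> C \<noteq> {}"
    and "r \<in> C"
  shows "min (dist r p) (dist r q) \<le> sqrt (d\<^sup>2 + (dist p q)\<^sup>2 / 4)"
proof -
  obtain x where x: "x \<in> closed_segment p q" "x \<in> C" using assms(4) by blast
  then obtain t where t: "0 \<le> t" "t \<le> 1" "x = (1 - t) *\<^sub>R p + t *\<^sub>R q"
    by (auto simp: closed_segment_def)
  have rx: "dist r x \<le> d" using diameter_bounded_bound[OF assms(2) assms(5) x(2)] assms(3) by simp
  have d0: "0 \<le> d" using rx by (metis dist_not_less_zero order_trans not_le)
  define y where "y = r - p"
  define w where "w = q - p"
  have e1: "r - x = y - t *\<^sub>R w" unfolding y_def w_def t(3) by (simp add: algebra_simps)
  have e2: "r - q = y - w" unfolding y_def w_def by simp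
  let ?m = "min (dist r p) (dist r q)"
  have m0: "0 \<le> ?m" by simp
  have "?m^2 = (1-t) * ?m^2 + t * ?m^2" by (simp add: algebra_simps)
  also have "\<dots> \<le> (1-t) * (dist r p)^2 + t * (dist r q)^2"
    by (intro add_mono mult_left_mono power_mono) (use t in auto)
  also have "\<dots> = (norm (y - t *\<^sub>R w))^2 + t*(1-t)*(norm w)^2"
    unfolding dist_norm y_def[symmetric] e2 by (rule key_id)
  also have "\<dots> = (dist r x)^2 + t*(1-t)*(dist p q)^2"
    unfolding dist_norm e1 w_def by (simp add: norm_minus_commute)
  also have "\<dots> \<le> d^2 + (dist p q)^2/4"
  proof (intro add_mono)
    show "(dist r x)^2 \<le> d^2" using rx by (simp add: power_mono)
    have "t*(1-t) \<le> 1/4" using sum_power2_ge_zero[of "t - 1/2" 0] by (simp add: power2_eq_square algebra_simps)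
    then show "t*(1-t)*(dist p q)^2 \<le> (dist p q)^2/4"
      using mult_right_mono[of "t*(1-t)" "1/4" "(dist p q)^2"] by simp
  qed
  finally show ?thesis using m0 by (simp add: real_le_rsqrt)
qed

end
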